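(* Let $f$, $G$, $\mathcal{D}$, $L$, $\sigma^2$, $\varepsilon$, $\Delta=f(x^0)-f^*$ be as in the hypotheses: $f:\mathbb{R}^d\to\mathbb{R}$ differentiable, $L$-smooth, bounded below by $f^*$, and $\mathbb{E}_{\xi\sim\mathcal{D}}[G(x;\xi)]=\nabla f(x)$, $\mathbb{E}_{\xi\sim\mathcal{D}}\|G(x;\xi)-\nabla f(x)\|^2\le\sigma^2$ for all $x$. Run Rennala SGD in the fixed computation model with $n$ workers and times $0<\tau_1\le\dots\le\tau_n$, batch size $S=\max\{\lceil\sigma^2/\varepsilon\rceil,1\}$ and stepsize $\gamma=\min\{1/L,\varepsilon S/(2L\sigma^2)\}$ ($\gamma=1/L$ if $\sigma^2=0$), and assume $K:=24L\Delta/\varepsilon$ is an integer. Then the server has computed $x^0,\dots,x^K$ by time $$96\cdot\min_{m\in[n]}\left[\Big(\frac1m\sum_{i=1}^m\frac1{\tau_i}\Big)^{-1}\Big(\frac{L\Delta}{\varepsilon}+\frac{\sigma^2L\Delta}{m\varepsilon^2}\Big)\right],$$ and $\frac1K\sum_{k=0}^{K-1}\mathbb{E}\|\nabla f(x^k)\|^2\le\varepsilon$.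
   Context: Rennala SGD in the fixed computation model: there are a server and $n$ workers; worker $i$ needs exactly $\tau_i$ seconds to compute one stochastic gradient $G(x;\xi)$ with a fresh independent $\xi\sim\mathcal{D}$; communication is instantaneous. At time $0$ every worker receives $(x^0,0)$ and starts computing. Each worker repeatedly: when it has received a pair $(x^k,k)$ it computes $G(x^k;\xi)$ (taking $\tau_i$ seconds), sends $(G(x^k;\xi),k)$ to the server, immediately receives back a pair, and starts computing at the received point. The server runs iterations $k=0,1,\dots,K-1$: it sets $g^k=0$ and an acceptance counter to $0$; whenever a pair $(g,k')$ arrives from a worker, if $k'=k$ it adds $g/S$ to $g^k$ and increments the counter, otherwise it discards $g$; in either case it then sends the current pair $(x^k,k)$ back to that worker; as soon as $S$ gradients have been accepted it sets $x^{k+1}=x^k-\gamma g^k$ and starts iteration $k+1$. *)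

theory Defs
  imports "HOL-Probability.Probability"
begin

text \<open>State of Rennala SGD in the fixed computation model (workers indexed 1..n).
  now: time of the last processed arrival; iter: current server iteration k;
  cnt: acceptance counter; acc: accumulator g^k; pt: current server point x^k;
  wlab i / wpt i: label and point worker i is currently computing at;
  wfin i: time at which worker i finishes its current computation.\<close>

record 'a rstate =
  now  :: real
  iter :: nat
  cnt  :: nat
  acc  :: 'a
  pt   :: 'a
  wlab :: "nat \<Rightarrow> nat"
  wpt  :: "nat \<Rightarrow> 'a"
  wfin :: "nat \<Rightarrow> real"

definition next_worker :: "nat \<Rightarrow> (nat \<Rightarrow> real) \<Rightarrow> nat" where
  "next_worker n fin =
     (LEAST i. 1 \<le> i \<and> i \<le> n \<and> (\<forall>j. 1 \<le> j \<and> j \<le> n \<longrightarrow> fin i \<le> fin j))"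

text \<open>Processing one arrival; xi is the fresh sample used by the computation
  that has just finished.\<close>
definition rennala_step ::
  "nat \<Rightarrow> (nat \<Rightarrow> real) \<Rightarrow> nat \<Rightarrow> real \<Rightarrow> ('a::real_vector \<Rightarrow> 'b \<Rightarrow> 'a) \<Rightarrow> 'b
    \<Rightarrow> 'a rstate \<Rightarrow> 'a rstate" where
  "rennala_step n \<tau> S \<gamma> G xi s =
    (let i = next_worker n (wfin s);
         t = wfin s i;
         g = G (wpt s i) xi;
         accepted = (wlab s i = iter s);
         acc1 = (if accepted then acc s + (1 / real S) *\<^sub>R g else acc s);
         cnt1 = (if accepted then Suc (cnt s) else cnt s);
         full = (cnt1 = S)
     in s\<lparr> now := t,
           wlab := (wlab s)(i := iter s),
           wpt := (wpt s)(i := pt s),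
           wfin := (wfin s)(i := t + \<tau> i),
           iter := (if full then Suc (iter s) else iter s),
           cnt := (if full then 0 else cnt1),
           acc := (if full then 0 else acc1),
           pt := (if full then pt s - \<gamma> *\<^sub>R acc1 else pt s) \<rparr>)"

definition rennala_init :: "(nat \<Rightarrow> real) \<Rightarrow> 'a::real_vector \<Rightarrow> 'a rstate" where
  "rennala_init \<tau> x0 =
     \<lparr> now = 0, iter = 0, cnt = 0, acc = 0, pt = x0,
       wlab = (\<lambda>_. 0), wpt = (\<lambda>_. x0), wfin = \<tau> \<rparr>"

text \<open>State after processing m arrivals; the m-th processed computation uses sample omega m.\<close>
primrec rennala_run ::
  "nat \<Rightarrow> (nat \<Rightarrow> real) \<Rightarrow> nat \<Rightarrow> real \<Rightarrow> ('a::real_vector \<Rightarrow> 'b \<Rightarrow> 'a) \<Rightarrow> 'a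
    \<Rightarrow> (nat \<Rightarrow> 'b) \<Rightarrow> nat \<Rightarrow> 'a rstate" where
  "rennala_run n \<tau> S \<gamma> G x0 \<omega> 0 = rennala_init \<tau> x0"
| "rennala_run n \<tau> S \<gamma> G x0 \<omega> (Suc m) =
     rennala_step n \<tau> S \<gamma> G (\<omega> m) (rennala_run n \<tau> S \<gamma> G x0 \<omega> m)"

definition rennala_iterate ::
  "nat \<Rightarrow> (nat \<Rightarrow> real) \<Rightarrow> nat \<Rightarrow> real \<Rightarrow> ('a::real_vector \<Rightarrow> 'b \<Rightarrow> 'a) \<Rightarrow> 'a
    \<Rightarrow> (nat \<Rightarrow> 'b) \<Rightarrow> nat \<Rightarrow> 'a" where
  "rennala_iterate n \<tau> S \<gamma> G x0 \<omega> k =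
     pt (rennala_run n \<tau> S \<gamma> G x0 \<omega> (LEAST m. iter (rennala_run n \<tau> S \<gamma> G x0 \<omega> m) = k))"

end

theory Submission
  imports Defs
begin


lemma nw_prop:
  assumes "n \<ge> (1::nat)"
  shows "next_worker n fin \<in> {1..n} \<and> (\<forall>j\<in>{1..n}. fin (next_worker n fin) \<le> fin j)"
proof -
  have fin: "finite (fin ` {1..n})" and ne: "fin ` {1..n} \<noteq> {}" using assms by auto
  obtain i0 where i0: "i0 \<in> {1..n}" "fin i0 = Min (fin ` {1..n})"
    using Min_in[OF fin ne] by auto
  have P: "1 \<le> i0 \<and> i0 \<le> n \<and> (\<forall>j. 1 \<le> j \<and> j \<le> n \<longrightarrow> fin i0 \<le> fin j)"
    using i0 fin by auto
  have "1 \<le> next_worker n fin \<and> next_worker n fin \<le> n \<and> (\<forall>j. 1 \<le> j \<and> j \<le> n \<longrightarrow> fin (next_worker n fin) \<le> fin j)"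
    unfolding next_worker_def by (rule LeastI[of _ i0], rule P)
  then show ?thesis by auto
qed

locale rs =
  fixes n :: nat and \<tau> :: "nat \<Rightarrow> real" and S :: nat and \<gamma> :: real
    and G :: "'a::real_vector \<Rightarrow> 'b \<Rightarrow> 'a" and x0 :: 'a
  assumes n_pos: "n \<ge> 1"
    and tau_pos: "\<And>i. 1 \<le> i \<Longrightarrow> i \<le> n \<Longrightarrow> 0 < \<tau> i"
    and tau_sorted: "\<And>i j. 1 \<le> i \<Longrightarrow> i \<le> j \<Longrightarrow> j \<le> n \<Longrightarrow> \<tau> i \<le> \<tau> j"
    and S_pos: "S \<ge> 1"
begin

abbreviation R where "R \<omega> m \<equiv> rennala_run n \<tau> S \<gamma> G x0 \<omega> m"
abbreviation nw where "nw s \<equiv> next_worker n (wfin s)"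
definition cnt1 :: "'a rstate \<Rightarrow> nat" where
  "cnt1 s = (if wlab s (nw s) = iter s then Suc (cnt s) else cnt s)"

lemma nw_in: "nw s \<in> {1..n}" and nw_min: "j \<in> {1..n} \<Longrightarrow> wfin s (nw s) \<le> wfin s j"
  using nw_prop[OF n_pos, of "wfin s"] by auto

lemma step_simps:
  "now (rennala_step n \<tau> S \<gamma> G xi s) = wfin s (nw s)"
  "iter (rennala_step n \<tau> S \<gamma> G xi s) = (if cnt1 s = S then Suc (iter s) else iter s)"
  "cnt (rennala_step n \<tau> S \<gamma> G xi s) = (if cnt1 s = S then 0 else cnt1 s)"
  "wlab (rennala_step n \<tau> S \<gamma> G xi s) = (wlab s)(nw s := iter s)"
  "wfin (rennala_step n \<tau> S \<gamma> G xi s) = (wfin s)(nw s := wfin s (nw s) + \<tau> (nw s))"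
  "wpt (rennala_step n \<tau> S \<gamma> G xi s) = (wpt s)(nw s := pt s)"
  "acc (rennala_step n \<tau> S \<gamma> G xi s) = (if cnt1 s = S then 0 else
      (if wlab s (nw s) = iter s then acc s + (1 / real S) *\<^sub>R G (wpt s (nw s)) xi else acc s))"
  "pt (rennala_step n \<tau> S \<gamma> G xi s) = (if cnt1 s = S then pt s - \<gamma> *\<^sub>R
      (if wlab s (nw s) = iter s then acc s + (1 / real S) *\<^sub>R G (wpt s (nw s)) xi else acc s) else pt s)"
  by (simp_all add: rennala_step_def Let_def cnt1_def)

lemma skel_indep:
  "now (R \<omega> m) = now (R \<omega>' m) \<and> iter (R \<omega> m) = iter (R \<omega>' m) \<and> cnt (R \<omega> m) = cnt (R \<omega>' m)
   \<and> wlab (R \<omega> m) = wlab (R \<omega>' m) \<and> wfin (R \<omega> m) = wfin (R \<omega>' m)"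
  by (induction m) (simp_all add: rennala_init_def step_simps cnt1_def)

lemma iter_step: "iter (R \<omega> (Suc m)) = iter (R \<omega> m) \<or> iter (R \<omega> (Suc m)) = Suc (iter (R \<omega> m))"
  by (simp add: step_simps)

lemma iter_mono: "m \<le> m' \<Longrightarrow> iter (R \<omega> m) \<le> iter (R \<omega> m')"
proof (induction m' rule: dec_induct)
  case (step k) then show ?case using iter_step[of \<omega> k] by auto
qed simp

definition ginv :: "'a rstate \<Rightarrow> bool" where
  "ginv s \<longleftrightarrow> (\<forall>j\<in>{1..n}. now s \<le> wfin s j \<and> wfin s j \<le> now s + \<tau> j) \<and> cnt s < S
     \<and> (\<forall>w. wlab s w \<le> iter s)"

lemma ginv_run: "ginv (R \<omega> m)"
proof (induction m)
  case 0 then show ?case using tau_pos S_pos by (auto simp: ginv_def rennala_init_def less_imp_le)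
next
  case (Suc m)
  define s where "s = R \<omega> m"
  have I: "ginv s" using Suc s_def by simp
  have i: "nw s \<in> {1..n}" by (rule nw_in)
  have mn: "\<And>j. j \<in> {1..n} \<Longrightarrow> wfin s (nw s) \<le> wfin s j" by (rule nw_min)
  have c: "cnt1 s \<le> S" using I unfolding ginv_def cnt1_def by auto
  show ?case unfolding s_def[symmetric] rennala_run.simps ginv_def step_simps
  proof (intro conjI ballI allI)
    fix j assume j: "j \<in> {1..n}"
    show "wfin s (nw s) \<le> ((wfin s)(nw s := wfin s (nw s) + \<tau> (nw s))) j"
      using mn[OF j] tau_pos[of "nw s"] i by auto
    show "((wfin s)(nw s := wfin s (nw s) + \<tau> (nw s))) j \<le> wfin s (nw s) + \<tau> j"
    proof -
      have "now s \<le> wfin s (nw s)" "wfin s j \<le> now s + \<tau> j" using I i j unfolding ginv_def by auto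
      then show ?thesis by auto
    qed
  next
    show "(if cnt1 s = S then 0 else cnt1 s) < S" using c S_pos by auto
  next
    fix w show "((wlab s)(nw s := iter s)) w \<le> (if cnt1 s = S then Suc (iter s) else iter s)"
      using I unfolding ginv_def by (auto simp: le_SucI)
  qed
qed

definition J :: "real \<Rightarrow> 'a rstate \<Rightarrow> bool" where
  "J T s \<longleftrightarrow> (\<exists>a::nat\<Rightarrow>nat. (\<Sum>i\<in>{1..n}. a i) \<le> cnt s \<and>
     (\<forall>i\<in>{1..n}. wfin s i \<le> T + \<tau> i * (real (a i) + (if wlab s i = iter s then 2 else 1))))"

lemma J_start: "ginv s \<Longrightarrow> J (now s) s"
  unfolding J_def ginv_def
proof (intro exI[of _ "\<lambda>_. 0"] conjI ballI)
  fix i assume "(\<forall>j\<in>{1..n}. now s \<le> wfin s j \<and> wfin s j \<le> now s + \<tau> j) \<and> cnt s < S \<and> (\<forall>w. wlab s w \<le> iter s)"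
    and i: "i \<in> {1..n}"
  then have "wfin s i \<le> now s + \<tau> i" by auto
  moreover have "\<tau> i \<le> \<tau> i * (real 0 + (if wlab s i = iter s then 2 else 1))"
    using tau_pos[of i] i by auto
  ultimately show "wfin s i \<le> now s + \<tau> i * (real 0 + (if wlab s i = iter s then 2 else 1))" by linarith
qed simp

lemma J_step:
  assumes J: "J T s" and g: "ginv s" and it: "iter (rennala_step n \<tau> S \<gamma> G xi s) = iter s"
  shows "J T (rennala_step n \<tau> S \<gamma> G xi s)"
proof -
  obtain a where a: "(\<Sum>i\<in>{1..n}. a i) \<le> cnt s"
    "\<And>i. i\<in>{1..n} \<Longrightarrow> wfin s i \<le> T + \<tau> i * (real (a i) + (if wlab s i = iter s then 2 else 1))"
    using J unfolding J_def by auto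
  define i where "i = nw s"
  have i1: "i \<in> {1..n}" unfolding i_def by (rule nw_in)
  have nf: "cnt1 s \<noteq> S" using it by (auto simp: step_simps split: if_splits)
  show ?thesis
  proof (cases "wlab s i = iter s")
    case True
    define a' where "a' = a(i := Suc (a i))"
    have "(\<Sum>j\<in>{1..n}. a' j) = (\<Sum>j\<in>{1..n}. a j) + 1"
    proof -
      have "(\<Sum>j\<in>{1..n}. a' j) = a' i + (\<Sum>j\<in>{1..n}-{i}. a' j)"
        using i1 by (simp add: sum.remove)
      also have "(\<Sum>j\<in>{1..n}-{i}. a' j) = (\<Sum>j\<in>{1..n}-{i}. a j)"
        by (rule sum.cong) (auto simp: a'_def)
      also have "(\<Sum>j\<in>{1..n}. a j) = a i + (\<Sum>j\<in>{1..n}-{i}. a j)"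
        using i1 by (simp add: sum.remove)
      ultimately show ?thesis by (simp add: a'_def)
    qed
    then have s1: "(\<Sum>j\<in>{1..n}. a' j) \<le> cnt (rennala_step n \<tau> S \<gamma> G xi s)"
      using a(1) nf True by (simp add: step_simps cnt1_def i_def)
    show ?thesis unfolding J_def
    proof (intro exI[of _ a'] conjI s1 ballI)
      fix j assume j: "j \<in> {1..n}"
      show "wfin (rennala_step n \<tau> S \<gamma> G xi s) j \<le> T + \<tau> j * (real (a' j) +
        (if wlab (rennala_step n \<tau> S \<gamma> G xi s) j = iter (rennala_step n \<tau> S \<gamma> G xi s) then 2 else 1))"
      proof (cases "j = i")
        case True
        with a(2)[OF i1] \<open>wlab s i = iter s\<close> it show ?thesis
          by (simp add: step_simps i_def[symmetric] a'_def algebra_simps)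
      next
        case False
        with a(2)[OF j] it show ?thesis
          by (simp add: step_simps i_def[symmetric] a'_def)
      qed
    qed
  next
    case False
    have s1: "(\<Sum>j\<in>{1..n}. a j) \<le> cnt (rennala_step n \<tau> S \<gamma> G xi s)"
      using a(1) nf False by (simp add: step_simps cnt1_def i_def)
    show ?thesis unfolding J_def
    proof (intro exI[of _ a] conjI s1 ballI)
      fix j assume j: "j \<in> {1..n}"
      show "wfin (rennala_step n \<tau> S \<gamma> G xi s) j \<le> T + \<tau> j * (real (a j) +
        (if wlab (rennala_step n \<tau> S \<gamma> G xi s) j = iter (rennala_step n \<tau> S \<gamma> G xi s) then 2 else 1))"
      proof (cases "j = i")
        case True
        with a(2)[OF i1] \<open>wlab s i \<noteq> iter s\<close> it show ?thesis
          by (simp add: step_simps i_def[symmetric] algebra_simps)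
      next
        case False
        with a(2)[OF j] it show ?thesis
          by (simp add: step_simps i_def[symmetric])
      qed
    qed
  qed
qed

definition H :: "nat \<Rightarrow> real" where "H m = (\<Sum>j=1..m. 1 / \<tau> j)"

lemma H_pos: "m \<in> {1..n} \<Longrightarrow> H m > 0"
  unfolding H_def using tau_pos by (intro sum_pos) auto

lemma J_bound:
  assumes J: "J T s" and m: "m \<in> {1..n}"
  shows "(wfin s (nw s) - T) * H m \<le> real (cnt s) + 2 * real m"
proof -
  obtain a where a: "(\<Sum>i\<in>{1..n}. a i) \<le> cnt s"
    "\<And>i. i\<in>{1..n} \<Longrightarrow> wfin s i \<le> T + \<tau> i * (real (a i) + (if wlab s i = iter s then 2 else 1))"
    using J unfolding J_def by auto
  have each: "(wfin s (nw s) - T) * (1 / \<tau> j) \<le> real (a j) + 2" if j: "j \<in> {1..m}" for j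
  proof -
    have jn: "j \<in> {1..n}" using j m by auto
    have tp: "\<tau> j > 0" using tau_pos jn by auto
    have "wfin s (nw s) \<le> T + \<tau> j * (real (a j) + 2)"
      using nw_min[OF jn] a(2)[OF jn] tp
      by (smt (verit) mult_left_mono of_nat_0_le_iff)
    then have "wfin s (nw s) - T \<le> \<tau> j * (real (a j) + 2)" by simp
    then show ?thesis using tp by (simp add: divide_simps mult.commute)
  qed
  have "(wfin s (nw s) - T) * H m = (\<Sum>j=1..m. (wfin s (nw s) - T) * (1 / \<tau> j))"
    unfolding H_def by (simp add: sum_distrib_left)
  also have "\<dots> \<le> (\<Sum>j=1..m. real (a j) + 2)" by (rule sum_mono) (rule each)
  also have "\<dots> = real (\<Sum>j=1..m. a j) + 2 * real m" by (simp add: sum.distrib)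
  also have "(\<Sum>j=1..m. a j) \<le> (\<Sum>j=1..n. a j)" using m by (intro sum_mono2) auto
  finally show ?thesis using a(1) by linarith
qed

lemma sumfin_step:
  "(\<Sum>j\<in>{1..n}. wfin (rennala_step n \<tau> S \<gamma> G xi s) j) = (\<Sum>j\<in>{1..n}. wfin s j) + \<tau> (nw s)"
proof -
  define i where "i = nw s"
  have i1: "i \<in> {1..n}" unfolding i_def by (rule nw_in)
  have "(\<Sum>j\<in>{1..n}. wfin (rennala_step n \<tau> S \<gamma> G xi s) j)
      = wfin (rennala_step n \<tau> S \<gamma> G xi s) i + (\<Sum>j\<in>{1..n}-{i}. wfin (rennala_step n \<tau> S \<gamma> G xi s) j)"
    using i1 by (simp add: sum.remove)
  also have "(\<Sum>j\<in>{1..n}-{i}. wfin (rennala_step n \<tau> S \<gamma> G xi s) j) = (\<Sum>j\<in>{1..n}-{i}. wfin s j)"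
    by (rule sum.cong) (auto simp: step_simps i_def)
  also have "(\<Sum>j\<in>{1..n}. wfin s j) = wfin s i + (\<Sum>j\<in>{1..n}-{i}. wfin s j)"
    using i1 by (simp add: sum.remove)
  ultimately show ?thesis by (simp add: step_simps i_def)
qed

lemma sumfin_bound:
  assumes "J T s" "ginv s"
  shows "(\<Sum>j\<in>{1..n}. wfin s j) \<le> (\<Sum>j\<in>{1..n}. T + \<tau> j * (real S + 1))"
proof -
  obtain a where a: "(\<Sum>i\<in>{1..n}. a i) \<le> cnt s"
    "\<And>i. i\<in>{1..n} \<Longrightarrow> wfin s i \<le> T + \<tau> i * (real (a i) + (if wlab s i = iter s then 2 else 1))"
    using assms(1) unfolding J_def by auto
  have cs: "cnt s < S" using assms(2) by (simp add: ginv_def)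
  show ?thesis
  proof (rule sum_mono)
    fix j assume j: "j \<in> {1..n}"
    have "a j \<le> (\<Sum>i\<in>{1..n}. a i)" using j by (intro member_le_sum) auto
    then have "real (a j) + 1 \<le> real S" using a(1) cs by linarith
    then have "real (a j) + (if wlab s j = iter s then 2 else 1) \<le> real S + 1" by auto
    then have "\<tau> j * (real (a j) + (if wlab s j = iter s then 2 else 1)) \<le> \<tau> j * (real S + 1)"
      using tau_pos[of j] j by (intro mult_left_mono) auto
    then show "wfin s j \<le> T + \<tau> j * (real S + 1)" using a(2)[OF j] by linarith
  qed
qed

lemma iteration_ends:
  assumes m0: "m0 \<in> {1..n}"
  shows "\<exists>m. iter (R \<omega> m) = k \<and> now (R \<omega> m) \<le> real k * ((real S - 1 + 2 * real m0) / H m0)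
            \<and> J (now (R \<omega> m)) (R \<omega> m)"
proof (induction k)
  case 0
  show ?case
    by (rule exI[of _ 0]) (use J_start[OF ginv_run[of \<omega> 0]] in \<open>simp add: rennala_init_def\<close>)
next
  case (Suc k)
  define \<delta> where "\<delta> = (real S - 1 + 2 * real m0) / H m0"
  obtain m where m: "iter (R \<omega> m) = k" "now (R \<omega> m) \<le> real k * \<delta>" "J (now (R \<omega> m)) (R \<omega> m)"
    using Suc unfolding \<delta>_def by auto
  define T where "T = now (R \<omega> m)"
  have tau1: "\<tau> 1 > 0" using tau_pos n_pos by auto
  have inv: "J T (R \<omega> (m + j)) \<and> (\<Sum>i\<in>{1..n}. wfin (R \<omega> m) i) + real j * \<tau> 1 \<le> (\<Sum>i\<in>{1..n}. wfin (R \<omega> (m + j)) i)"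
    if "\<forall>i\<le>j. iter (R \<omega> (m + i)) = k" for j
    using that
  proof (induction j)
    case 0 then show ?case using m(3) by (simp add: T_def)
  next
    case (Suc j)
    then have ih: "J T (R \<omega> (m + j))" "(\<Sum>i\<in>{1..n}. wfin (R \<omega> m) i) + real j * \<tau> 1 \<le> (\<Sum>i\<in>{1..n}. wfin (R \<omega> (m + j)) i)"
      by auto
    have it: "iter (R \<omega> (Suc (m + j))) = iter (R \<omega> (m + j))" using Suc.prems
      by (metis add_Suc_right le_Suc_eq order_refl)
    have "J T (R \<omega> (m + Suc j))"
      using J_step[OF ih(1) ginv_run it[unfolded rennala_run.simps]] by simp
    moreover have "\<tau> 1 \<le> \<tau> (nw (R \<omega> (m + j)))"
      using nw_in[of "R \<omega> (m + j)"] by (intro tau_sorted) auto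
    ultimately show ?case using ih(2) sumfin_step[of "\<omega> (m+j)" "R \<omega> (m + j)"]
      by (simp add: algebra_simps)
  qed
  have exj: "\<exists>j. iter (R \<omega> (m + j)) \<noteq> k"
  proof (rule ccontr)
    assume "\<not> ?thesis"
    then have all: "\<And>j. \<forall>i\<le>j. iter (R \<omega> (m + i)) = k" by auto
    define C where "C = (\<Sum>j\<in>{1..n}. T + \<tau> j * (real S + 1)) - (\<Sum>i\<in>{1..n}. wfin (R \<omega> m) i)"
    obtain j :: nat where j: "C / \<tau> 1 < real j" using reals_Archimedean2 by blast
    have "(\<Sum>i\<in>{1..n}. wfin (R \<omega> m) i) + real j * \<tau> 1 \<le> (\<Sum>j\<in>{1..n}. T + \<tau> j * (real S + 1))"
      using inv[OF all[of j]] sumfin_bound[of T "R \<omega> (m + j)"] ginv_run by fastforce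
    then have "real j * \<tau> 1 \<le> C" unfolding C_def by linarith
    moreover have "C < real j * \<tau> 1" using j tau1 by (simp add: divide_simps)
    ultimately show False by linarith
  qed
  define j0 where "j0 = (LEAST j. iter (R \<omega> (m + j)) \<noteq> k)"
  have j0: "iter (R \<omega> (m + j0)) \<noteq> k" unfolding j0_def using exj by (rule LeastI_ex)
  have before: "\<And>j. j < j0 \<Longrightarrow> iter (R \<omega> (m + j)) = k" unfolding j0_def using not_less_Least by blast
  have "j0 \<noteq> 0"
  proof
    assume "j0 = 0" then show False using j0 m(1) by simp
  qed
  then obtain j1 where j1: "j0 = Suc j1" by (cases j0) auto
  have allj1: "\<forall>i\<le>j1. iter (R \<omega> (m + i)) = k" using before j1 by auto
  define s where "s = R \<omega> (m + j1)"
  have Js: "J T s" using inv[OF allj1] by (simp add: s_def)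
  have its: "iter s = k" using allj1 s_def by auto
  have next_eq: "R \<omega> (m + j0) = rennala_step n \<tau> S \<gamma> G (\<omega> (m + j1)) s"
    by (simp add: j1 s_def)
  have itn: "iter (R \<omega> (m + j0)) = Suc k"
    using iter_step[of \<omega> "m + j1"] j0 its s_def j1 by auto
  have nown: "now (R \<omega> (m + j0)) = wfin s (nw s)" by (simp add: next_eq step_simps)
  have cs: "cnt s < S" using ginv_run[of \<omega> "m + j1"] by (simp add: s_def ginv_def)
  have b: "(wfin s (nw s) - T) * H m0 \<le> real (cnt s) + 2 * real m0" by (rule J_bound[OF Js m0])
  have Hp: "H m0 > 0" using H_pos[OF m0] .
  have "real (cnt s) \<le> real S - 1" using cs by linarith
  then have "(wfin s (nw s) - T) * H m0 \<le> real S - 1 + 2 * real m0" using b by linarith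
  then have "wfin s (nw s) - T \<le> \<delta>" unfolding \<delta>_def using Hp by (simp add: divide_simps)
  then have "now (R \<omega> (m + j0)) \<le> real (Suc k) * \<delta>" using nown m(2) T_def by (simp add: algebra_simps)
  then show ?case
    using itn J_start[OF ginv_run[of \<omega> "m + j0"]] unfolding \<delta>_def by blast
qed

end



lemma set_lt_Suc: "{i\<in>A. i < Suc j} = (if j \<in> A then insert j {i\<in>A. i < j} else {i\<in>A. i < j})"
  by (auto simp: less_Suc_eq)

context rs begin

definition sk where "sk j = R (\<lambda>_. undefined) j"
definition Aset :: "nat \<Rightarrow> nat set" where
  "Aset k = {j. iter (sk j) = k \<and> wlab (sk j) (nw (sk j)) = iter (sk j)}"
definition Bset :: "nat \<Rightarrow> nat set" where "Bset k = (\<Union>l<k. Aset l)"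

primrec X :: "nat \<Rightarrow> (nat \<Rightarrow> 'b) \<Rightarrow> 'a" where
  "X 0 \<omega> = x0"
| "X (Suc k) \<omega> = X k \<omega> - \<gamma> *\<^sub>R (\<Sum>j\<in>Aset k. (1 / real S) *\<^sub>R G (X k \<omega>) (\<omega> j))"

lemma sk_eq: "iter (R \<omega> j) = iter (sk j)" "wlab (R \<omega> j) = wlab (sk j)" "cnt (R \<omega> j) = cnt (sk j)"
  "wfin (R \<omega> j) = wfin (sk j)" "now (R \<omega> j) = now (sk j)"
  unfolding sk_def using skel_indep[of \<omega> j "\<lambda>_. undefined"] by auto

lemma inA_iff: "j \<in> Aset k \<longleftrightarrow> iter (R \<omega> j) = k \<and> wlab (R \<omega> j) (nw (R \<omega> j)) = iter (R \<omega> j)"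
  by (simp add: Aset_def sk_eq)

lemma sk_mono: "i \<le> j \<Longrightarrow> iter (sk i) \<le> iter (sk j)"
  unfolding sk_def by (rule iter_mono)

definition inv2 :: "(nat \<Rightarrow> 'b) \<Rightarrow> nat \<Rightarrow> bool" where
  "inv2 \<omega> j \<longleftrightarrow> (\<forall>w. wlab (R \<omega> j) w = iter (R \<omega> j) \<longrightarrow> wpt (R \<omega> j) w = pt (R \<omega> j))
    \<and> acc (R \<omega> j) = (\<Sum>i\<in>{i\<in>Aset (iter (R \<omega> j)). i < j}. (1 / real S) *\<^sub>R G (pt (R \<omega> j)) (\<omega> i))
    \<and> pt (R \<omega> j) = X (iter (R \<omega> j)) \<omega>
    \<and> cnt (R \<omega> j) = card {i\<in>Aset (iter (R \<omega> j)). i < j}"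

lemma Aset_lt_Suc:
  assumes "iter (R \<omega> j) = k"
  shows "{i\<in>Aset k. i < Suc j} = (if wlab (R \<omega> j) (nw (R \<omega> j)) = iter (R \<omega> j)
             then insert j {i\<in>Aset k. i < j} else {i\<in>Aset k. i < j})"
  using assms by (simp add: set_lt_Suc inA_iff[of j k \<omega>])

lemma inv2_run: "inv2 \<omega> j"
proof (induction j)
  case 0 then show ?case by (simp add: inv2_def rennala_init_def Aset_def)
next
  case (Suc j)
  define s where "s = R \<omega> j"
  define k where "k = iter s"
  have I: "\<forall>w. wlab s w = k \<longrightarrow> wpt s w = pt s"
      "acc s = (\<Sum>i\<in>{i\<in>Aset k. i < j}. (1 / real S) *\<^sub>R G (pt s) (\<omega> i))"
      "pt s = X k \<omega>" "cnt s = card {i\<in>Aset k. i < j}"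
    using Suc unfolding inv2_def s_def k_def by auto
  have g: "ginv s" unfolding s_def by (rule ginv_run)
  have fin: "finite {i\<in>Aset k. i < j}" by simp
  have eqS: "{i\<in>Aset k. i < Suc j} = (if wlab s (nw s) = k then insert j {i\<in>Aset k. i < j} else {i\<in>Aset k. i < j})"
    using Aset_lt_Suc[of \<omega> j k] by (simp add: s_def k_def)
  have c1: "cnt1 s = card {i\<in>Aset k. i < Suc j}"
    using I(4) fin by (cases "wlab s (nw s) = k") (simp_all add: eqS cnt1_def k_def[symmetric])
  have a1: "(if wlab s (nw s) = iter s then acc s + (1 / real S) *\<^sub>R G (wpt s (nw s)) (\<omega> j) else acc s)
        = (\<Sum>i\<in>{i\<in>Aset k. i < Suc j}. (1 / real S) *\<^sub>R G (pt s) (\<omega> i))"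
    using I(1,2) fin by (cases "wlab s (nw s) = k") (simp_all add: eqS k_def[symmetric] add.commute)
  have RS: "R \<omega> (Suc j) = rennala_step n \<tau> S \<gamma> G (\<omega> j) s" by (simp add: s_def)
  show ?case
  proof (cases "cnt1 s = S")
    case False
    show ?thesis unfolding inv2_def RS step_simps using False I a1 c1
      by (auto simp: k_def)
  next
    case True
    have e1: "{i\<in>Aset (Suc k). i < Suc j} = {}"
    proof -
      { fix i assume "i \<in> Aset (Suc k)" "i < Suc j"
        then have "iter (sk i) = Suc k" "iter (sk i) \<le> iter (sk j)" using sk_mono[of i j] by (auto simp: Aset_def less_Suc_eq_le)
        then have False using k_def s_def sk_eq(1) by fastforce }
      then show ?thesis by auto
    qed
    have e2: "{i\<in>Aset k. i < Suc j} = Aset k"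
    proof -
      { fix i assume i: "i \<in> Aset k" "\<not> i < Suc j"
        then have "iter (sk (Suc j)) \<le> iter (sk i)" by (intro sk_mono) auto
        moreover have "iter (sk (Suc j)) = Suc k" using RS True sk_eq(1)[of \<omega> "Suc j"]
          by (simp add: step_simps k_def)
        ultimately have False using i by (auto simp: Aset_def) }
      then show ?thesis by auto
    qed
    have lab: "\<And>w. wlab s w \<le> k" using g by (simp add: ginv_def k_def)
    have pt': "pt (rennala_step n \<tau> S \<gamma> G (\<omega> j) s) = X (Suc k) \<omega>"
      using True a1 e2 I(3) by (simp add: step_simps k_def[symmetric])
    have it': "iter (rennala_step n \<tau> S \<gamma> G (\<omega> j) s) = Suc k"
      using True by (simp add: step_simps k_def[symmetric])
    have wl: "\<forall>w. wlab (rennala_step n \<tau> S \<gamma> G (\<omega> j) s) w \<noteq> Suc k"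
      using lab by (simp add: step_simps k_def[symmetric]) (metis Suc_n_not_le_n)
    have "acc (rennala_step n \<tau> S \<gamma> G (\<omega> j) s) = 0" "cnt (rennala_step n \<tau> S \<gamma> G (\<omega> j) s) = 0"
      using True by (simp_all add: step_simps)
    then show ?thesis unfolding inv2_def RS it' pt' using wl by (simp add: e1)
  qed
qed

lemma reach: "\<exists>m. iter (R \<omega> m) = k"
proof -
  have "1 \<in> {1..n}" using n_pos by simp
  from iteration_ends[OF this, of \<omega> k] show ?thesis by blast
qed

lemma iterate_eq: "rennala_iterate n \<tau> S \<gamma> G x0 \<omega> k = X k \<omega>"
proof -
  have "iter (R \<omega> (LEAST m. iter (R \<omega> m) = k)) = k" using reach by (rule LeastI_ex)
  moreover have "pt (R \<omega> (LEAST m. iter (R \<omega> m) = k)) = X (iter (R \<omega> (LEAST m. iter (R \<omega> m) = k))) \<omega>"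
    using inv2_run[of \<omega> "LEAST m. iter (R \<omega> m) = k"] unfolding inv2_def by blast
  ultimately show ?thesis unfolding rennala_iterate_def by simp
qed

lemma Aset_card: "finite (Aset k) \<and> card (Aset k) = S"
proof -
  define \<omega> :: "nat \<Rightarrow> 'b" where "\<omega> = (\<lambda>_. undefined)"
  have ex: "\<exists>m. iter (R \<omega> m) = Suc k" by (rule reach)
  define m where "m = (LEAST m. iter (R \<omega> m) = Suc k)"
  have m: "iter (R \<omega> m) = Suc k" unfolding m_def using ex by (rule LeastI_ex)
  have "m \<noteq> 0" proof assume "m = 0" then show False using m by (simp add: rennala_init_def) qed
  then obtain j where j: "m = Suc j" by (cases m) auto
  have "iter (R \<omega> j) \<noteq> Suc k" using not_less_Least[of j "\<lambda>m. iter (R \<omega> m) = Suc k"] j m_def by auto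
  then have itj: "iter (R \<omega> j) = k" using iter_step[of \<omega> j] m j by auto
  define s where "s = R \<omega> j"
  have full: "cnt1 s = S" using m j itj by (simp add: s_def step_simps split: if_splits)
  have sub: "Aset k \<subseteq> {..<Suc j}"
  proof
    fix i assume i: "i \<in> Aset k"
    show "i \<in> {..<Suc j}"
    proof (rule ccontr)
      assume "i \<notin> {..<Suc j}"
      then have "iter (sk (Suc j)) \<le> iter (sk i)" by (intro sk_mono) auto
      moreover have "iter (sk (Suc j)) = Suc k" using m j sk_eq(1) by metis
      ultimately show False using i by (auto simp: Aset_def)
    qed
  qed
  have e: "{i\<in>Aset k. i < Suc j} = Aset k" using sub by auto
  have fin: "finite {i\<in>Aset k. i < j}" by simp
  have eqS: "{i\<in>Aset k. i < Suc j} = (if wlab s (nw s) = k then insert j {i\<in>Aset k. i < j} else {i\<in>Aset k. i < j})"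
    using Aset_lt_Suc[of \<omega> j k] itj by (simp add: s_def)
  have "cnt s = card {i\<in>Aset k. i < j}" using inv2_run[of \<omega> j] itj by (simp add: inv2_def s_def)
  then have "cnt1 s = card {i\<in>Aset k. i < Suc j}"
    using fin itj by (simp add: eqS cnt1_def s_def)
  moreover have "finite (Aset k)" using sub by (rule finite_subset) simp
  ultimately show ?thesis using full e by simp
qed

lemma Aset_disj: "k \<noteq> l \<Longrightarrow> Aset k \<inter> Aset l = {}"
  by (auto simp: Aset_def)

lemma Bset_fin: "finite (Bset k)" unfolding Bset_def using Aset_card by blast
lemma Bset_Suc: "Bset (Suc k) = Bset k \<union> Aset k" unfolding Bset_def by (auto simp: lessThan_Suc)
lemma Bset_disj: "Bset k \<inter> Aset k = {}" unfolding Bset_def Aset_def by auto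
lemma Bset_mono: "k \<le> l \<Longrightarrow> Bset k \<subseteq> Bset l" unfolding Bset_def by (rule UN_mono) auto

lemma X_dep: "(\<And>j. j \<in> Bset k \<Longrightarrow> \<omega> j = \<omega>' j) \<Longrightarrow> X k \<omega> = X k \<omega>'"
proof (induction k)
  case (Suc k)
  have "X k \<omega> = X k \<omega>'" using Suc by (auto simp: Bset_Suc)
  moreover have "\<And>j. j \<in> Aset k \<Longrightarrow> \<omega> j = \<omega>' j" using Suc.prems by (auto simp: Bset_Suc)
  ultimately show ?case by simp
qed simp

end



lemma descent:
  fixes f :: "'a::real_inner \<Rightarrow> real"
  assumes grad: "\<And>x. (f has_derivative (\<lambda>h. gradf x \<bullet> h)) (at x)"
    and smooth: "\<And>x y. norm (gradf x - gradf y) \<le> L * norm (x - y)"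
  shows "f y \<le> f x + gradf x \<bullet> (y - x) + L / 2 * (norm (y - x))\<^sup>2"
proof -
  define d where "d = y - x"
  define \<phi> where "\<phi> t = f (x + t *\<^sub>R d) - t * (gradf x \<bullet> d) - L / 2 * t\<^sup>2 * (norm d)\<^sup>2" for t
  have deriv: "(\<phi> has_real_derivative (gradf (x + t *\<^sub>R d) \<bullet> d - gradf x \<bullet> d - L * t * (norm d)\<^sup>2)) (at t)" for t
  proof -
    have "((\<lambda>t. x + t *\<^sub>R d) has_derivative (\<lambda>h. h *\<^sub>R d)) (at t)"
      by (auto intro!: derivative_eq_intros)
    from has_derivative_compose[OF this grad] have
      "((\<lambda>t. f (x + t *\<^sub>R d)) has_derivative (\<lambda>h. gradf (x + t *\<^sub>R d) \<bullet> (h *\<^sub>R d))) (at t)" .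
    then have "((\<lambda>t. f (x + t *\<^sub>R d)) has_real_derivative (gradf (x + t *\<^sub>R d) \<bullet> d)) (at t)"
      by (rule has_derivative_imp_has_field_derivative) (simp add: mult.commute)
    then show ?thesis unfolding \<phi>_def
      by (auto intro!: derivative_eq_intros simp: algebra_simps)
  qed
  have le: "gradf (x + t *\<^sub>R d) \<bullet> d - gradf x \<bullet> d - L * t * (norm d)\<^sup>2 \<le> 0" if "0 \<le> t" for t
  proof -
    have "gradf (x + t *\<^sub>R d) \<bullet> d - gradf x \<bullet> d = (gradf (x + t *\<^sub>R d) - gradf x) \<bullet> d"
      by (simp add: inner_diff_left)
    also have "\<dots> \<le> norm (gradf (x + t *\<^sub>R d) - gradf x) * norm d" by (rule norm_cauchy_schwarz)
    also have "\<dots> \<le> L * norm (t *\<^sub>R d) * norm d"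
      using smooth[of "x + t *\<^sub>R d" x] by (simp add: mult_right_mono)
    also have "\<dots> = L * t * (norm d)\<^sup>2" using that by (simp add: power2_eq_square)
    finally show ?thesis by simp
  qed
  have "\<phi> 1 \<le> \<phi> 0"
  proof (rule DERIV_nonpos_imp_nonincreasing[of 0 1])
    fix t :: real assume "0 \<le> t" "t \<le> 1"
    then show "\<exists>y. (\<phi> has_real_derivative y) (at t) \<and> y \<le> 0" using deriv[of t] le[of t] by blast
  qed simp
  then show ?thesis by (simp add: \<phi>_def d_def)
qed

lemma PPS: "prob_space D \<Longrightarrow> product_prob_space (\<lambda>_. D)"
  by (simp add: product_prob_space_def product_prob_space_axioms_def product_sigma_finite_def
      prob_space_imp_sigma_finite)

lemma norm_add_sq: "(norm (a + b))\<^sup>2 = (norm a)\<^sup>2 + 2 * (a \<bullet> b) + (norm (b::'a::real_inner))\<^sup>2"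
  by (simp add: power2_norm_eq_inner inner_add_left inner_add_right inner_commute[of b a])

lemma norm_add_sq_le: "(norm (a + b))\<^sup>2 \<le> 2 * (norm a)\<^sup>2 + 2 * (norm (b::'a::real_normed_vector))\<^sup>2"
proof -
  have "norm (a + b) \<le> norm a + norm b" by (rule norm_triangle_ineq)
  then have "(norm (a + b))\<^sup>2 \<le> (norm a + norm b)\<^sup>2" by (simp add: power_mono)
  also have "\<dots> = 2 * (norm a)\<^sup>2 + 2 * (norm b)\<^sup>2 - (norm a - norm b)\<^sup>2"
    by (simp add: power2_eq_square algebra_simps)
  also have "\<dots> \<le> 2 * (norm a)\<^sup>2 + 2 * (norm b)\<^sup>2" by simp
  finally show ?thesis .
qed

lemma var_sum:
  fixes e :: "'b \<Rightarrow> 'a::euclidean_space" and A :: "nat set"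
  assumes D: "prob_space D" and ie: "integrable D e" and e0: "integral\<^sup>L D e = 0"
    and ie2: "integrable D (\<lambda>\<xi>. (norm (e \<xi>))\<^sup>2)" and v: "integral\<^sup>L D (\<lambda>\<xi>. (norm (e \<xi>))\<^sup>2) \<le> v"
    and A: "finite A"
  shows "integrable (PiM A (\<lambda>_. D)) (\<lambda>z. (norm (\<Sum>j\<in>A. e (z j)))\<^sup>2) \<and>
         integral\<^sup>L (PiM A (\<lambda>_. D)) (\<lambda>z. (norm (\<Sum>j\<in>A. e (z j)))\<^sup>2) \<le> real (card A) * v"
  using A
proof (induction A rule: finite_induct)
  case empty then show ?case by simp
next
  case (insert i A)
  interpret P: product_prob_space "\<lambda>_. D" "insert i A" by (rule PPS[OF D])
  have PAsp: "measure (PiM A (\<lambda>_. D)) (space (PiM A (\<lambda>_. D))) = 1"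
    by (rule prob_space.prob_space, rule prob_space_PiM) (use D in auto)
  have Dsp: "measure D (space D) = 1" using prob_space.prob_space[OF D] .
  have em[measurable]: "e \<in> borel_measurable D" using ie by auto
  define s where "s z = (\<Sum>j\<in>A. e (z j))" for z :: "nat \<Rightarrow> 'b"
  have sm[measurable]: "s \<in> borel_measurable (PiM K (\<lambda>_. D))" if "A \<subseteq> K" for K
  proof -
    have "(\<lambda>z. e (z j)) \<in> borel_measurable (PiM K (\<lambda>_. D))" if "j \<in> K" for j
      using measurable_compose[OF measurable_component_singleton[OF that, of "\<lambda>_. D"] em] by simp
    then show ?thesis unfolding s_def using that by (intro borel_measurable_sum) auto
  qed
  have dr: "PiM A (\<lambda>_.D) = distr (PiM (insert i A) (\<lambda>_. D)) (PiM A (\<lambda>_. D)) (\<lambda>f. restrict f A)"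
    by (rule P.distr_restrict) (use insert in auto)
  have int_s: "integrable (PiM (insert i A) (\<lambda>_. D)) (\<lambda>z. (norm (s z))\<^sup>2)"
  proof -
    have "integrable (distr (PiM (insert i A) (\<lambda>_. D)) (PiM A (\<lambda>_. D)) (\<lambda>f. restrict f A)) (\<lambda>z. (norm (s z))\<^sup>2)"
      using insert.IH dr by (simp add: s_def)
    then have "integrable (PiM (insert i A) (\<lambda>_. D)) (\<lambda>z. (norm (s (restrict z A)))\<^sup>2)"
      by (subst (asm) integrable_distr_eq) (auto intro: measurable_restrict_subset)
    moreover have "s (restrict z A) = s z" for z unfolding s_def by (rule sum.cong) auto
    ultimately show ?thesis by simp
  qed
  have int_e: "integrable (PiM (insert i A) (\<lambda>_. D)) (\<lambda>z. (norm (e (z i)))\<^sup>2)"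
  proof -
    have "integrable (distr (PiM (insert i A) (\<lambda>_. D)) D (\<lambda>\<omega>. \<omega> i)) (\<lambda>\<xi>. (norm (e \<xi>))\<^sup>2)"
      using P.PiM_component[of i] ie2 by simp
    then show ?thesis by (subst (asm) integrable_distr_eq) auto
  qed
  have smi[measurable]: "s \<in> borel_measurable (PiM (insert i A) (\<lambda>_. D))" by (rule sm) auto
  have eim[measurable]: "(\<lambda>z. e (z i)) \<in> borel_measurable (PiM (insert i A) (\<lambda>_. D))"
    using measurable_compose[OF measurable_component_singleton[of i "insert i A" "\<lambda>_. D"] em] by simp
  have sumeq: "(\<Sum>j\<in>insert i A. e (z j)) = s z + e (z i)" for z
    using insert by (simp add: s_def add.commute)
  have int_F: "integrable (PiM (insert i A) (\<lambda>_. D)) (\<lambda>z. (norm (s z + e (z i)))\<^sup>2)"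
  proof (rule Bochner_Integration.integrable_bound[OF Bochner_Integration.integrable_add[OF integrable_mult_right[OF int_s, of 2] integrable_mult_right[OF int_e, of 2]]])
    show "(\<lambda>z. (norm (s z + e (z i)))\<^sup>2) \<in> borel_measurable (PiM (insert i A) (\<lambda>_. D))" by measurable
    show "AE z in PiM (insert i A) (\<lambda>_. D). norm ((norm (s z + e (z i)))\<^sup>2) \<le> norm (2 * (norm (s z))\<^sup>2 + 2 * (norm (e (z i)))\<^sup>2)"
      using norm_add_sq_le by auto
  qed
  define V where "V = integral\<^sup>L D (\<lambda>\<xi>. (norm (e \<xi>))\<^sup>2)"
  have inner_eq: "integral\<^sup>L D (\<lambda>y. (norm (a + e y))\<^sup>2) = (norm a)\<^sup>2 + V" for a
  proof -
    have "integral\<^sup>L D (\<lambda>y. (norm (a + e y))\<^sup>2) = integral\<^sup>L D (\<lambda>y. ((norm a)\<^sup>2 + 2 * (a \<bullet> e y)) + (norm (e y))\<^sup>2)"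
      by (simp add: norm_add_sq)
    also have "\<dots> = integral\<^sup>L D (\<lambda>y. (norm a)\<^sup>2 + 2 * (a \<bullet> e y)) + V"
      unfolding V_def by (rule Bochner_Integration.integral_add) (use ie ie2 in auto)
    also have "integral\<^sup>L D (\<lambda>y. (norm a)\<^sup>2 + 2 * (a \<bullet> e y)) = (norm a)\<^sup>2 + 2 * (a \<bullet> integral\<^sup>L D e)"
      using ie by (simp add: Dsp)
    finally show ?thesis using e0 by simp
  qed
  have "integral\<^sup>L (PiM (insert i A) (\<lambda>_. D)) (\<lambda>z. (norm (\<Sum>j\<in>insert i A. e (z j)))\<^sup>2)
      = integral\<^sup>L (PiM (insert i A) (\<lambda>_. D)) (\<lambda>z. (norm (s z + e (z i)))\<^sup>2)"
    by (simp add: sumeq)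
  also have "\<dots> = (\<integral>u. (\<integral>y. (norm (s (u(i := y)) + e ((u(i := y)) i)))\<^sup>2 \<partial>D) \<partial>PiM A (\<lambda>_. D))"
    by (rule P.product_integral_insert) (use insert int_F in auto)
  also have "\<dots> = (\<integral>u. (norm (s u))\<^sup>2 + V \<partial>PiM A (\<lambda>_. D))"
  proof (rule Bochner_Integration.integral_cong[OF refl])
    fix u assume "u \<in> space (PiM A (\<lambda>_. D))"
    have "s (u(i := y)) = s u" for y unfolding s_def using insert by (intro sum.cong) auto
    then show "(\<integral>y. (norm (s (u(i := y)) + e ((u(i := y)) i)))\<^sup>2 \<partial>D) = (norm (s u))\<^sup>2 + V"
      by (simp add: inner_eq)
  qed
  also have "\<dots> = integral\<^sup>L (PiM A (\<lambda>_. D)) (\<lambda>u. (norm (s u))\<^sup>2) + V"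
  proof -
    have ic: "integrable (PiM A (\<lambda>_. D)) (\<lambda>_. V)"
      by (rule finite_measure.integrable_const, rule prob_space.axioms(1), rule prob_space_PiM) (use D in auto)
    show ?thesis
      using insert.IH ic by (simp add: s_def PAsp Bochner_Integration.integral_add)
  qed
  also have "\<dots> \<le> real (card A) * v + v" using insert.IH v V_def by (simp add: s_def)
  also have "\<dots> = real (card (insert i A)) * v" using insert by (simp add: algebra_simps)
  finally have val: "integral\<^sup>L (PiM (insert i A) (\<lambda>_. D)) (\<lambda>z. (norm (\<Sum>j\<in>insert i A. e (z j)))\<^sup>2) \<le> real (card (insert i A)) * v" .
  show ?case using int_F val by (simp add: sumeq)
qed


lemma inner_bound:
  fixes f :: "'a::euclidean_space \<Rightarrow> real" and gradf :: "'a \<Rightarrow> 'a" and G :: "'a \<Rightarrow> 'b \<Rightarrow> 'a"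
    and A :: "nat set" and D :: "'b measure"
  assumes grad: "\<And>x. (f has_derivative (\<lambda>h. gradf x \<bullet> h)) (at x)"
    and smooth: "\<And>x y. norm (gradf x - gradf y) \<le> L * norm (x - y)"
    and lower: "\<And>x. fstar \<le> f x"
    and D: "prob_space D"
    and unbiased_int: "\<And>x. integrable D (\<lambda>\<xi>. G x \<xi>)"
    and unbiased: "\<And>x. (\<integral>\<xi>. G x \<xi> \<partial>D) = gradf x"
    and var_int: "\<And>x. integrable D (\<lambda>\<xi>. (norm (G x \<xi> - gradf x))\<^sup>2)"
    and var: "\<And>x. (\<integral>\<xi>. (norm (G x \<xi> - gradf x))\<^sup>2 \<partial>D) \<le> \<sigma>\<^sup>2"
    and A: "finite A" "card A = S" "S \<ge> 1"
    and gam: "0 < \<gamma>" "\<gamma> * L \<le> 1" and Lpos: "L > 0"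
  shows "(\<integral>\<^sup>+z. ennreal (f (x - \<gamma> *\<^sub>R (\<Sum>j\<in>A. (1 / real S) *\<^sub>R G x (z j))) - fstar) \<partial>PiM A (\<lambda>_. D))
          + ennreal (\<gamma> / 2 * (norm (gradf x))\<^sup>2)
         \<le> ennreal (f x - fstar) + ennreal (L * \<gamma>\<^sup>2 * \<sigma>\<^sup>2 / (2 * real S))"
proof -
  interpret P: product_prob_space "\<lambda>_. D" A by (rule PPS[OF D])
  have Dsp: "measure D (space D) = 1" using prob_space.prob_space[OF D] .
  have PAsp: "measure (PiM A (\<lambda>_. D)) (space (PiM A (\<lambda>_. D))) = 1"
    by (rule prob_space.prob_space, rule prob_space_PiM) (use D in auto)
  have PAfin: "finite_measure (PiM A (\<lambda>_. D))"
    by (rule prob_space.axioms(1), rule prob_space_PiM) (use D in auto)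
  define d where "d = gradf x"
  define e where "e \<xi> = G x \<xi> - d" for \<xi>
  have Dfin: "finite_measure D" using D by (rule prob_space.axioms(1))
  have ie: "integrable D e" unfolding e_def
    using unbiased_int[of x] finite_measure.integrable_const[OF Dfin, of d] by simp
  have e0: "integral\<^sup>L D e = 0" unfolding e_def
    using unbiased_int[of x] unbiased[of x] Dfin Dsp
    by (simp add: Bochner_Integration.integral_diff d_def finite_measure.integrable_const)
  have ie2: "integrable D (\<lambda>\<xi>. (norm (e \<xi>))\<^sup>2)" unfolding e_def d_def by (rule var_int)
  have v: "integral\<^sup>L D (\<lambda>\<xi>. (norm (e \<xi>))\<^sup>2) \<le> \<sigma>\<^sup>2" unfolding e_def d_def by (rule var)
  have em[measurable]: "e \<in> borel_measurable D" using ie by auto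
  define E where "E z = (\<Sum>j\<in>A. e (z j))" for z :: "nat \<Rightarrow> 'b"
  have VS: "integrable (PiM A (\<lambda>_. D)) (\<lambda>z. (norm (E z))\<^sup>2)"
     "integral\<^sup>L (PiM A (\<lambda>_. D)) (\<lambda>z. (norm (E z))\<^sup>2) \<le> real S * \<sigma>\<^sup>2"
    using var_sum[OF D ie e0 ie2 v A(1)] A(2) unfolding E_def by auto
  have iej: "integrable (PiM A (\<lambda>_. D)) (\<lambda>z. e (z j))" and iej0: "integral\<^sup>L (PiM A (\<lambda>_. D)) (\<lambda>z. e (z j)) = 0"
    if j: "j \<in> A" for j
  proof -
    have dd: "distr (PiM A (\<lambda>_. D)) D (\<lambda>\<omega>. \<omega> j) = D" using P.PiM_component[OF j] by simp
    have mj: "(\<lambda>\<omega>. \<omega> j) \<in> measurable (PiM A (\<lambda>_. D)) D"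
      using measurable_component_singleton[OF j, of "\<lambda>_. D"] by simp
    show "integrable (PiM A (\<lambda>_. D)) (\<lambda>z. e (z j))"
      using ie dd integrable_distr_eq[OF mj em] by simp
    show "integral\<^sup>L (PiM A (\<lambda>_. D)) (\<lambda>z. e (z j)) = 0"
      using integral_distr[OF mj em] dd e0 by simp
  qed
  have iE: "integrable (PiM A (\<lambda>_. D)) E" unfolding E_def
    by (rule Bochner_Integration.integrable_sum) (rule iej)
  have iE0: "integral\<^sup>L (PiM A (\<lambda>_. D)) E = 0" unfolding E_def
    using iej iej0 by (simp add: Bochner_Integration.integral_sum)
  have Spos: "real S > 0" using A(3) by simp
  have geq: "(\<Sum>j\<in>A. (1 / real S) *\<^sub>R G x (z j)) = d + (1 / real S) *\<^sub>R E z" for z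
  proof -
    have "(\<Sum>j\<in>A. (1 / real S) *\<^sub>R G x (z j)) = (1 / real S) *\<^sub>R (\<Sum>j\<in>A. d + e (z j))"
      by (simp add: scaleR_sum_right e_def)
    also have "\<dots> = (1 / real S) *\<^sub>R (real S *\<^sub>R d + E z)"
      by (simp add: sum.distrib E_def sum_constant_scaleR A(2))
    also have "\<dots> = d + (1 / real S) *\<^sub>R E z" using Spos by (simp add: scaleR_add_right)
    finally show ?thesis .
  qed
  define c0 where "c0 = f x - fstar - \<gamma> * (norm d)\<^sup>2 + L * \<gamma>\<^sup>2 / 2 * (norm d)\<^sup>2"
  define c1 where "c1 = L * \<gamma>\<^sup>2 / real S - \<gamma> / real S"
  define c2 where "c2 = L * \<gamma>\<^sup>2 / (2 * (real S)\<^sup>2)"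
  define Q where "Q z = c0 + c1 * (d \<bullet> E z) + c2 * (norm (E z))\<^sup>2" for z
  have ptw: "f (x - \<gamma> *\<^sub>R (\<Sum>j\<in>A. (1 / real S) *\<^sub>R G x (z j))) - fstar \<le> Q z" for z
  proof -
    define g where "g = d + (1 / real S) *\<^sub>R E z"
    have "f (x - \<gamma> *\<^sub>R g) \<le> f x + gradf x \<bullet> (x - \<gamma> *\<^sub>R g - x) + L / 2 * (norm (x - \<gamma> *\<^sub>R g - x))\<^sup>2"
      by (rule descent[OF grad smooth])
    also have "\<dots> = f x - \<gamma> * (d \<bullet> g) + L / 2 * \<gamma>\<^sup>2 * (norm g)\<^sup>2"
      using gam by (simp add: d_def power_mult_distrib)
    also have "d \<bullet> g = (norm d)\<^sup>2 + (1 / real S) * (d \<bullet> E z)"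
      by (simp add: g_def inner_add_right power2_norm_eq_inner)
    also have "(norm g)\<^sup>2 = (norm d)\<^sup>2 + 2 * ((1 / real S) * (d \<bullet> E z)) + (1 / real S)\<^sup>2 * (norm (E z))\<^sup>2"
      unfolding g_def norm_add_sq by (simp add: power_mult_distrib power_divide)
    finally have "f (x - \<gamma> *\<^sub>R g) \<le> f x - \<gamma> * ((norm d)\<^sup>2 + 1 / real S * (d \<bullet> E z)) +
      L / 2 * \<gamma>\<^sup>2 * ((norm d)\<^sup>2 + 2 * (1 / real S * (d \<bullet> E z)) + (1 / real S)\<^sup>2 * (norm (E z))\<^sup>2)" .
    moreover have "f x - \<gamma> * ((norm d)\<^sup>2 + 1 / real S * (d \<bullet> E z)) +
      L / 2 * \<gamma>\<^sup>2 * ((norm d)\<^sup>2 + 2 * (1 / real S * (d \<bullet> E z)) + (1 / real S)\<^sup>2 * (norm (E z))\<^sup>2) - fstar = Q z"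
      unfolding Q_def c0_def c1_def c2_def using Spos by (simp add: field_simps power2_eq_square)
    ultimately show ?thesis unfolding g_def[symmetric] geq by (simp add: g_def)
  qed
  have Qnn: "0 \<le> Q z" for z using ptw[of z] lower[of "x - \<gamma> *\<^sub>R (\<Sum>j\<in>A. (1 / real S) *\<^sub>R G x (z j))"] by linarith
  have iQ: "integrable (PiM A (\<lambda>_. D)) Q" unfolding Q_def
    using iE VS(1) finite_measure.integrable_const[OF PAfin, of c0] by auto
  have intQ: "integral\<^sup>L (PiM A (\<lambda>_. D)) Q = c0 + c2 * integral\<^sup>L (PiM A (\<lambda>_. D)) (\<lambda>z. (norm (E z))\<^sup>2)"
    unfolding Q_def using iE VS(1) iE0 PAfin PAsp
    by (simp add: Bochner_Integration.integral_add finite_measure.integrable_const)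
  have c2nn: "c2 \<ge> 0" unfolding c2_def using Lpos by simp
  have "c2 * integral\<^sup>L (PiM A (\<lambda>_. D)) (\<lambda>z. (norm (E z))\<^sup>2) \<le> c2 * (real S * \<sigma>\<^sup>2)"
    by (rule mult_left_mono[OF VS(2) c2nn])
  also have "\<dots> = L * \<gamma>\<^sup>2 * \<sigma>\<^sup>2 / (2 * real S)" unfolding c2_def using Spos by (simp add: field_simps power2_eq_square)
  finally have b2: "c2 * integral\<^sup>L (PiM A (\<lambda>_. D)) (\<lambda>z. (norm (E z))\<^sup>2) \<le> L * \<gamma>\<^sup>2 * \<sigma>\<^sup>2 / (2 * real S)" .
  have b1: "L * \<gamma>\<^sup>2 / 2 * (norm d)\<^sup>2 \<le> \<gamma> / 2 * (norm d)\<^sup>2"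
  proof -
    have "L * \<gamma>\<^sup>2 = \<gamma> * (\<gamma> * L)" by (simp add: power2_eq_square algebra_simps)
    also have "\<dots> \<le> \<gamma> * 1" using gam by (intro mult_left_mono) auto
    finally show ?thesis by (intro mult_right_mono) auto
  qed
  have bound: "integral\<^sup>L (PiM A (\<lambda>_. D)) Q + \<gamma> / 2 * (norm d)\<^sup>2 \<le> f x - fstar + L * \<gamma>\<^sup>2 * \<sigma>\<^sup>2 / (2 * real S)"
    using intQ b1 b2 unfolding c0_def by linarith
  have "(\<integral>\<^sup>+z. ennreal (f (x - \<gamma> *\<^sub>R (\<Sum>j\<in>A. (1 / real S) *\<^sub>R G x (z j))) - fstar) \<partial>PiM A (\<lambda>_. D))
      \<le> (\<integral>\<^sup>+z. ennreal (Q z) \<partial>PiM A (\<lambda>_. D))"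
    by (rule nn_integral_mono) (simp add: ptw ennreal_leI)
  also have "\<dots> = ennreal (integral\<^sup>L (PiM A (\<lambda>_. D)) Q)"
    by (rule nn_integral_eq_integral[OF iQ]) (simp add: Qnn)
  finally have "(\<integral>\<^sup>+z. ennreal (f (x - \<gamma> *\<^sub>R (\<Sum>j\<in>A. (1 / real S) *\<^sub>R G x (z j))) - fstar) \<partial>PiM A (\<lambda>_. D))
      + ennreal (\<gamma> / 2 * (norm (gradf x))\<^sup>2) \<le> ennreal (integral\<^sup>L (PiM A (\<lambda>_. D)) Q) + ennreal (\<gamma> / 2 * (norm d)\<^sup>2)"
    by (simp add: d_def add_right_mono)
  also have "\<dots> = ennreal (integral\<^sup>L (PiM A (\<lambda>_. D)) Q + \<gamma> / 2 * (norm d)\<^sup>2)"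
    using gam by (intro ennreal_plus[symmetric] integral_nonneg_AE) (auto simp: Qnn)
  also have "\<dots> \<le> ennreal (f x - fstar + L * \<gamma>\<^sup>2 * \<sigma>\<^sup>2 / (2 * real S))"
    by (rule ennreal_leI[OF bound])
  also have "\<dots> = ennreal (f x - fstar) + ennreal (L * \<gamma>\<^sup>2 * \<sigma>\<^sup>2 / (2 * real S))"
    using lower[of x] Lpos Spos by (intro ennreal_plus) auto
  finally show ?thesis .
qed




lemma nn_restrict:
  assumes D: "prob_space D" and B: "finite B"
    and hm: "h \<in> borel_measurable (PiM B (\<lambda>_. D))" and hr: "\<And>\<omega>. h (restrict \<omega> B) = h \<omega>"
  shows "(\<integral>\<^sup>+\<omega>. h \<omega> \<partial>PiM UNIV (\<lambda>_::nat. D)) = (\<integral>\<^sup>+z. h z \<partial>PiM B (\<lambda>_. D))"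
proof -
  interpret P: product_prob_space "\<lambda>_. D" "UNIV :: nat set" by (rule PPS[OF D])
  have "distr (PiM UNIV (\<lambda>_. D)) (PiM B (\<lambda>_. D)) (\<lambda>x. restrict x B) = PiM B (\<lambda>_. D)"
    by (rule P.distr_PiM_restrict_finite) (use B in auto)
  then have "(\<integral>\<^sup>+z. h z \<partial>PiM B (\<lambda>_. D)) = (\<integral>\<^sup>+z. h z \<partial>distr (PiM UNIV (\<lambda>_. D)) (PiM B (\<lambda>_. D)) (\<lambda>x. restrict x B))"
    by simp
  also have "\<dots> = (\<integral>\<^sup>+\<omega>. h (restrict \<omega> B) \<partial>PiM UNIV (\<lambda>_. D))"
    by (rule nn_integral_distr) (use hm in \<open>auto intro: measurable_restrict_subset\<close>)
  finally show ?thesis by (simp add: hr)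
qed

locale rs2 = rs n \<tau> S \<gamma> G x0 for n \<tau> S \<gamma> and G :: "'a::euclidean_space \<Rightarrow> 'b \<Rightarrow> 'a" and x0 +
  fixes f :: "'a \<Rightarrow> real" and gradf :: "'a \<Rightarrow> 'a" and D :: "'b measure" and L \<sigma> fstar :: real
  assumes grad: "\<And>x. (f has_derivative (\<lambda>h. gradf x \<bullet> h)) (at x)"
    and Lpos: "L > 0"
    and smooth: "\<And>x y. norm (gradf x - gradf y) \<le> L * norm (x - y)"
    and lower: "\<And>x. fstar \<le> f x"
    and D_prob: "prob_space D"
    and G_meas: "(\<lambda>(x, \<xi>). G x \<xi>) \<in> borel_measurable (borel \<Otimes>\<^sub>M D)"
    and unbiased_int: "\<And>x. integrable D (\<lambda>\<xi>. G x \<xi>)"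
    and unbiased: "\<And>x. (\<integral>\<xi>. G x \<xi> \<partial>D) = gradf x"
    and var_int: "\<And>x. integrable D (\<lambda>\<xi>. (norm (G x \<xi> - gradf x))\<^sup>2)"
    and var: "\<And>x. (\<integral>\<xi>. (norm (G x \<xi> - gradf x))\<^sup>2 \<partial>D) \<le> \<sigma>\<^sup>2"
    and gam: "0 < \<gamma>" "\<gamma> * L \<le> 1"
begin

abbreviation PP where "PP \<equiv> PiM (UNIV :: nat set) (\<lambda>_. D)"

lemma f_meas[measurable]: "f \<in> borel_measurable borel"
proof -
  have "continuous_on UNIV f"
    by (rule continuous_at_imp_continuous_on) (use has_derivative_continuous[OF grad] in auto)
  then show ?thesis by (rule borel_measurable_continuous_onI)
qed

lemma gradf_meas[measurable]: "gradf \<in> borel_measurable borel"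
proof -
  have "L-lipschitz_on UNIV gradf"
    by (rule lipschitz_onI) (use smooth Lpos in \<open>auto simp: dist_norm\<close>)
  then have "continuous_on UNIV gradf" by (rule lipschitz_on_continuous_on)
  then show ?thesis by (rule borel_measurable_continuous_onI)
qed

lemma meas_F1: "Y \<in> borel_measurable M \<Longrightarrow> (\<lambda>\<omega>. ennreal (f (Y \<omega>) - fstar)) \<in> borel_measurable M"
proof -
  assume Y: "Y \<in> borel_measurable M"
  have "(\<lambda>v. ennreal (f v - fstar)) \<in> borel_measurable borel"
    by (rule measurable_compose[OF _ measurable_ennreal], rule borel_measurable_diff[OF f_meas]) simp
  from measurable_compose[OF Y this] show ?thesis .
qed

lemma meas_F2: "Y \<in> borel_measurable M \<Longrightarrow> (\<lambda>\<omega>. ennreal (\<gamma> / 2 * (norm (gradf (Y \<omega>)))\<^sup>2)) \<in> borel_measurable M"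
proof -
  assume Y: "Y \<in> borel_measurable M"
  have c: "(\<lambda>v::'a. \<gamma> / 2 * (norm v)\<^sup>2) \<in> borel_measurable borel"
    by (rule borel_measurable_continuous_onI) (intro continuous_intros)
  have "(\<lambda>v. ennreal (\<gamma> / 2 * (norm (gradf v))\<^sup>2)) \<in> borel_measurable borel"
    by (rule measurable_compose[OF _ measurable_ennreal], rule measurable_compose[OF gradf_meas c])
  from measurable_compose[OF Y this] show ?thesis .
qed

lemma X_meas: "Bset k \<subseteq> I \<Longrightarrow> X k \<in> borel_measurable (PiM I (\<lambda>_. D))"
proof (induction k)
  case 0 then show ?case by simp
next
  case (Suc k)
  have IH: "X k \<in> borel_measurable (PiM I (\<lambda>_. D))"
    using Suc Bset_mono[of k "Suc k"] by auto
  have t: "(\<lambda>\<omega>. G (X k \<omega>) (\<omega> j)) \<in> borel_measurable (PiM I (\<lambda>_. D))" if j: "j \<in> Aset k" for j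
  proof -
    have jI: "j \<in> I" using Suc.prems j by (auto simp: Bset_Suc)
    have "(\<lambda>\<omega>. (X k \<omega>, \<omega> j)) \<in> measurable (PiM I (\<lambda>_. D)) (borel \<Otimes>\<^sub>M D)"
      by (rule measurable_Pair[OF IH]) (use measurable_component_singleton[OF jI, of "\<lambda>_. D"] in simp)
    from measurable_compose[OF this G_meas] show ?thesis by simp
  qed
  have "(\<lambda>\<omega>. \<Sum>j\<in>Aset k. (1 / real S) *\<^sub>R G (X k \<omega>) (\<omega> j)) \<in> borel_measurable (PiM I (\<lambda>_. D))"
    by (intro borel_measurable_sum borel_measurable_scaleR borel_measurable_const t)
  then show ?case using IH by simp
qed

lemma X_restrict: "Bset k \<subseteq> B \<Longrightarrow> X k (restrict \<omega> B) = X k \<omega>"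
  by (rule X_dep) auto

definition a where "a k = (\<integral>\<^sup>+\<omega>. ennreal (f (X k \<omega>) - fstar) \<partial>PP)"
definition b where "b k = (\<integral>\<^sup>+\<omega>. ennreal (\<gamma> / 2 * (norm (gradf (X k \<omega>)))\<^sup>2) \<partial>PP)"
definition c where "c = ennreal (L * \<gamma>\<^sup>2 * \<sigma>\<^sup>2 / (2 * real S))"

lemma step_bound: "a (Suc k) + b k \<le> a k + c"
proof -
  define Bk where "Bk = Bset k"
  define Ak where "Ak = Aset k"
  have BA: "Bset (Suc k) = Bk \<union> Ak" by (simp add: Bk_def Ak_def Bset_Suc)
  have disj: "Bk \<inter> Ak = {}" by (simp add: Bk_def Ak_def Bset_disj)
  have finB: "finite Bk" by (simp add: Bk_def Bset_fin)
  have finA: "finite Ak" "card Ak = S" using Aset_card[of k] by (simp_all add: Ak_def)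
  define F where "F \<omega> = ennreal (f (X (Suc k) \<omega>) - fstar) + ennreal (\<gamma> / 2 * (norm (gradf (X k \<omega>)))\<^sup>2)" for \<omega>
  have Fm: "F \<in> borel_measurable (PiM I (\<lambda>_. D))" if "Bset (Suc k) \<subseteq> I" for I
  proof -
    have m1: "X (Suc k) \<in> borel_measurable (PiM I (\<lambda>_. D))" by (rule X_meas) (use that in simp)
    have m2: "X k \<in> borel_measurable (PiM I (\<lambda>_. D))"
      by (rule X_meas, rule subset_trans[OF Bset_mono[of k "Suc k"] that]) simp
    show ?thesis unfolding F_def by (rule borel_measurable_add[OF meas_F1[OF m1] meas_F2[OF m2]])
  qed
  have "a (Suc k) + b k = (\<integral>\<^sup>+\<omega>. F \<omega> \<partial>PP)"
  proof -
    have m1: "X (Suc k) \<in> borel_measurable PP" by (rule X_meas) simp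
    have m2: "X k \<in> borel_measurable PP" by (rule X_meas) simp
    show ?thesis unfolding F_def a_def b_def by (rule nn_integral_add[symmetric, OF meas_F1[OF m1] meas_F2[OF m2]])
  qed
  also have "\<dots> = (\<integral>\<^sup>+z. F z \<partial>PiM (Bk \<union> Ak) (\<lambda>_. D))"
  proof (rule nn_restrict[OF D_prob])
    show "finite (Bk \<union> Ak)" using finB finA by simp
    show "F \<in> borel_measurable (PiM (Bk \<union> Ak) (\<lambda>_. D))" using Fm[of "Bk \<union> Ak"] BA by simp
    have s1: "Bset (Suc k) \<subseteq> Bk \<union> Ak" by (simp add: BA)
    have s2: "Bset k \<subseteq> Bk \<union> Ak" by (simp add: Bk_def)
    fix \<omega> show "F (restrict \<omega> (Bk \<union> Ak)) = F \<omega>"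
      unfolding F_def X_restrict[OF s1] X_restrict[OF s2] ..
  qed
  also have "\<dots> = (\<integral>\<^sup>+u. (\<integral>\<^sup>+z. F (merge Bk Ak (u, z)) \<partial>PiM Ak (\<lambda>_. D)) \<partial>PiM Bk (\<lambda>_. D))"
  proof -
    interpret P: product_prob_space "\<lambda>_. D" "UNIV :: nat set" by (rule PPS[OF D_prob])
    have FmBA: "F \<in> borel_measurable (PiM (Bk \<union> Ak) (\<lambda>_. D))" using Fm[of "Bk \<union> Ak"] BA by simp
    show ?thesis
      by (rule P.product_nn_integral_fold[OF disj finB finA(1) FmBA])
  qed
  also have "\<dots> \<le> (\<integral>\<^sup>+u. ennreal (f (X k u) - fstar) + c \<partial>PiM Bk (\<lambda>_. D))"
  proof (rule nn_integral_mono)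
    fix u assume u: "u \<in> space (PiM Bk (\<lambda>_. D))"
    define x where "x = X k u"
    have Xmerge: "X k (merge Bk Ak (u, z)) = x" for z
      unfolding x_def by (rule X_dep) (auto simp: merge_def Bk_def)
    have mz: "merge Bk Ak (u, z) j = z j" if "j \<in> Ak" for z j
      using that disj by (auto simp: merge_def)
    define h where "h z = ennreal (f (x - \<gamma> *\<^sub>R (\<Sum>j\<in>Ak. (1 / real S) *\<^sub>R G x (z j))) - fstar)" for z
    have Fz: "F (merge Bk Ak (u, z)) = h z + ennreal (\<gamma> / 2 * (norm (gradf x))\<^sup>2)" for z
    proof -
      have "X (Suc k) (merge Bk Ak (u, z)) = x - \<gamma> *\<^sub>R (\<Sum>j\<in>Ak. (1 / real S) *\<^sub>R G x (z j))"
        using mz by (simp add: Xmerge Ak_def[symmetric])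
      then show ?thesis unfolding F_def h_def Xmerge by simp
    qed
    have Gm: "(\<lambda>\<xi>. G x \<xi>) \<in> borel_measurable D" using unbiased_int[of x] by auto
    have hm: "h \<in> borel_measurable (PiM Ak (\<lambda>_. D))"
    proof -
      have "(\<lambda>z. G x (z j)) \<in> borel_measurable (PiM Ak (\<lambda>_. D))" if "j \<in> Ak" for j
        using measurable_compose[OF measurable_component_singleton[OF that, of "\<lambda>_. D"] Gm] by simp
      then have "(\<lambda>z. \<Sum>j\<in>Ak. (1 / real S) *\<^sub>R G x (z j)) \<in> borel_measurable (PiM Ak (\<lambda>_. D))"
        by (intro borel_measurable_sum borel_measurable_scaleR borel_measurable_const)
      then have "(\<lambda>z. x - \<gamma> *\<^sub>R (\<Sum>j\<in>Ak. (1 / real S) *\<^sub>R G x (z j))) \<in> borel_measurable (PiM Ak (\<lambda>_. D))"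
        by (intro borel_measurable_diff borel_measurable_scaleR borel_measurable_const)
      then show ?thesis unfolding h_def by (rule meas_F1)
    qed
    have PAe: "emeasure (PiM Ak (\<lambda>_. D)) (space (PiM Ak (\<lambda>_. D))) = 1"
      by (rule prob_space.emeasure_space_1, rule prob_space_PiM) (use D_prob in auto)
    have "(\<integral>\<^sup>+z. F (merge Bk Ak (u, z)) \<partial>PiM Ak (\<lambda>_. D))
        = (\<integral>\<^sup>+z. h z \<partial>PiM Ak (\<lambda>_. D)) + ennreal (\<gamma> / 2 * (norm (gradf x))\<^sup>2)"
      unfolding Fz using hm PAe by (subst nn_integral_add) auto
    also have "\<dots> \<le> ennreal (f x - fstar) + c"
      unfolding h_def c_def
      by (rule inner_bound[OF grad smooth lower D_prob unbiased_int unbiased var_int var finA S_pos gam Lpos])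
    finally show "(\<integral>\<^sup>+z. F (merge Bk Ak (u, z)) \<partial>PiM Ak (\<lambda>_. D)) \<le> ennreal (f (X k u) - fstar) + c"
      by (simp add: x_def)
  qed
  also have "\<dots> = (\<integral>\<^sup>+u. ennreal (f (X k u) - fstar) \<partial>PiM Bk (\<lambda>_. D)) + c"
  proof -
    have PBe: "emeasure (PiM Bk (\<lambda>_. D)) (space (PiM Bk (\<lambda>_. D))) = 1"
      by (rule prob_space.emeasure_space_1, rule prob_space_PiM) (use D_prob in auto)
    have "(\<lambda>u. ennreal (f (X k u) - fstar)) \<in> borel_measurable (PiM Bk (\<lambda>_. D))"
      by (rule meas_F1, rule X_meas) (simp add: Bk_def)
    then show ?thesis using PBe by (subst nn_integral_add) auto
  qed
  also have "(\<integral>\<^sup>+u. ennreal (f (X k u) - fstar) \<partial>PiM Bk (\<lambda>_. D)) = a k"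
  proof -
    have "(\<lambda>u. ennreal (f (X k u) - fstar)) \<in> borel_measurable (PiM Bk (\<lambda>_. D))"
      by (rule meas_F1, rule X_meas) (simp add: Bk_def)
    moreover have "X k (restrict \<omega> Bk) = X k \<omega>" for \<omega> by (rule X_restrict) (simp add: Bk_def)
    ultimately show ?thesis unfolding a_def
      by (intro nn_restrict[OF D_prob finB, symmetric]) auto
  qed
  finally show ?thesis .
qed

lemma sum_bound: "a K + (\<Sum>k<K. b k) \<le> a 0 + of_nat K * c"
proof (induction K)
  case 0 then show ?case by simp
next
  case (Suc K)
  have "a (Suc K) + (\<Sum>k<Suc K. b k) = (a (Suc K) + b K) + (\<Sum>k<K. b k)" by (simp add: algebra_simps)
  also have "\<dots> \<le> (a K + c) + (\<Sum>k<K. b k)" by (rule add_right_mono[OF step_bound])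
  also have "\<dots> = (a K + (\<Sum>k<K. b k)) + c" by (simp add: algebra_simps)
  also have "\<dots> \<le> (a 0 + of_nat K * c) + c" by (rule add_right_mono[OF Suc.IH])
  also have "\<dots> = a 0 + of_nat (Suc K) * c" by (simp add: algebra_simps)
  finally show ?case .
qed

end



theorem mainTheorem3:
  fixes f :: "'a::euclidean_space \<Rightarrow> real"
    and gradf :: "'a \<Rightarrow> 'a"
    and D :: "'b measure"
    and G :: "'a \<Rightarrow> 'b \<Rightarrow> 'a"
    and L \<sigma> \<epsilon> fstar \<Delta> \<gamma> :: real
    and x0 :: 'a
    and n S K :: nat
    and \<tau> :: "nat \<Rightarrow> real"
  assumes grad: "\<And>x. (f has_derivative (\<lambda>h. gradf x \<bullet> h)) (at x)"
    and Lpos: "L > 0"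
    and smooth: "\<And>x y. norm (gradf x - gradf y) \<le> L * norm (x - y)"
    and lower: "\<And>x. fstar \<le> f x"
    and Delta: "\<Delta> = f x0 - fstar"
    and D_prob: "prob_space D"
    and G_meas: "(\<lambda>(x, \<xi>). G x \<xi>) \<in> borel_measurable (borel \<Otimes>\<^sub>M D)"
    and unbiased_int: "\<And>x. integrable D (\<lambda>\<xi>. G x \<xi>)"
    and unbiased: "\<And>x. (\<integral>\<xi>. G x \<xi> \<partial>D) = gradf x"
    and var_int: "\<And>x. integrable D (\<lambda>\<xi>. (norm (G x \<xi> - gradf x))\<^sup>2)"
    and var: "\<And>x. (\<integral>\<xi>. (norm (G x \<xi> - gradf x))\<^sup>2 \<partial>D) \<le> \<sigma>\<^sup>2"
    and eps: "\<epsilon> > 0"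
    and n_pos: "n \<ge> 1"
    and tau_pos: "\<And>i. 1 \<le> i \<Longrightarrow> i \<le> n \<Longrightarrow> 0 < \<tau> i"
    and tau_sorted: "\<And>i j. 1 \<le> i \<Longrightarrow> i \<le> j \<Longrightarrow> j \<le> n \<Longrightarrow> \<tau> i \<le> \<tau> j"
    and S_def: "S = nat (max \<lceil>\<sigma>\<^sup>2 / \<epsilon>\<rceil> 1)"
    and gamma_def: "\<gamma> = (if \<sigma>\<^sup>2 = 0 then 1 / L
                        else min (1 / L) (\<epsilon> * real S / (2 * L * \<sigma>\<^sup>2)))"
    and K_def: "real K = 24 * L * \<Delta> / \<epsilon>"
  shows "(\<forall>\<omega>. \<exists>m. iter (rennala_run n \<tau> S \<gamma> G x0 \<omega> m) = K \<and>
              now (rennala_run n \<tau> S \<gamma> G x0 \<omega> m) \<le>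
                96 * Min ((\<lambda>m. inverse ((1 / real m) * (\<Sum>i=1..m. 1 / \<tau> i)) *
                         (L * \<Delta> / \<epsilon> + \<sigma>\<^sup>2 * L * \<Delta> / (real m * \<epsilon>\<^sup>2))) ` {1..n}))
         \<and> ennreal (1 / real K) *
             (\<Sum>k<K. \<integral>\<^sup>+ \<omega>. ennreal ((norm (gradf (rennala_iterate n \<tau> S \<gamma> G x0 \<omega> k)))\<^sup>2)
                        \<partial>(PiM UNIV (\<lambda>_::nat. D)))
           \<le> ennreal \<epsilon>"
proof -
  define q where "q = \<sigma>\<^sup>2 / \<epsilon>"
  have q0: "q \<ge> 0" unfolding q_def using eps by simp
  have Sreal: "real S = max (real_of_int \<lceil>q\<rceil>) 1" unfolding S_def q_def by simp
  have Spos: "S \<ge> 1" unfolding S_def by simp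
  have Sge: "real S \<ge> q" using Sreal le_of_int_ceiling[of q] by linarith
  have Sle: "real S - 1 \<le> q"
  proof (cases "real_of_int \<lceil>q\<rceil> \<ge> 1")
    case True then show ?thesis using Sreal ceiling_correct[of q] by linarith
  next
    case False then show ?thesis using Sreal q0 by linarith
  qed
  have gpos: "0 < \<gamma>" and gL: "\<gamma> * L \<le> 1" and gL2: "\<gamma> * L \<ge> 1 / 2"
  proof -
    have "\<gamma> > 0 \<and> \<gamma> * L \<le> 1 \<and> \<gamma> * L \<ge> 1 / 2"
    proof (cases "\<sigma>\<^sup>2 = 0")
      case True then show ?thesis using gamma_def Lpos by simp
    next
      case False
      then have s2: "\<sigma>\<^sup>2 > 0" by simp
      define t where "t = \<epsilon> * real S / (2 * L * \<sigma>\<^sup>2)"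
      have tpos: "t > 0" unfolding t_def using eps Spos Lpos s2 by simp
      have "t * L = \<epsilon> * real S / (2 * \<sigma>\<^sup>2)" unfolding t_def using Lpos by (simp add: field_simps)
      also have "\<dots> \<ge> 1 / 2"
      proof -
        have "\<sigma>\<^sup>2 \<le> \<epsilon> * real S" using Sge eps unfolding q_def by (simp add: divide_simps mult.commute)
        then show ?thesis using s2 by (simp add: field_simps)
      qed
      finally have tL: "t * L \<ge> 1 / 2" .
      have g: "\<gamma> = min (1 / L) t" using gamma_def False t_def by simp
      show ?thesis
      proof (cases "1 / L \<le> t")
        case True then show ?thesis using g Lpos by simp
      next
        case F: False
        then have "\<gamma> = t" using g by simp
        moreover have "t * L \<le> 1" using F Lpos by (simp add: field_simps)
        ultimately show ?thesis using tpos tL by simp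
      qed
    qed
    then show "0 < \<gamma>" "\<gamma> * L \<le> 1" "\<gamma> * L \<ge> 1 / 2" by auto
  qed
  have Dnn: "\<Delta> \<ge> 0" using Delta lower[of x0] by simp
  interpret R: rs2 n \<tau> S \<gamma> G x0 f gradf D L \<sigma> fstar
    by (intro rs2.intro rs.intro rs2_axioms.intro) (fact n_pos tau_pos tau_sorted Spos grad Lpos smooth lower D_prob G_meas
        unbiased_int unbiased var_int var gpos gL)+
  show ?thesis
  proof
    show "\<forall>\<omega>. \<exists>m. iter (rennala_run n \<tau> S \<gamma> G x0 \<omega> m) = K \<and>
              now (rennala_run n \<tau> S \<gamma> G x0 \<omega> m) \<le>
                96 * Min ((\<lambda>m. inverse ((1 / real m) * (\<Sum>i=1..m. 1 / \<tau> i)) *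
                         (L * \<Delta> / \<epsilon> + \<sigma>\<^sup>2 * L * \<Delta> / (real m * \<epsilon>\<^sup>2))) ` {1..n})"
    proof
      fix \<omega>
      define h where "h m = inverse ((1 / real m) * (\<Sum>i=1..m. 1 / \<tau> i)) *
                         (L * \<Delta> / \<epsilon> + \<sigma>\<^sup>2 * L * \<Delta> / (real m * \<epsilon>\<^sup>2))" for m
      have fin: "finite (h ` {1..n})" and ne: "h ` {1..n} \<noteq> {}" using n_pos by auto
      obtain m0 where m0: "m0 \<in> {1..n}" "h m0 = Min (h ` {1..n})"
        using Min_in[OF fin ne] by auto
      obtain m where m: "iter (rennala_run n \<tau> S \<gamma> G x0 \<omega> m) = K"
        "now (rennala_run n \<tau> S \<gamma> G x0 \<omega> m) \<le> real K * ((real S - 1 + 2 * real m0) / R.H m0)"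
        using R.iteration_ends[OF m0(1), of \<omega> K] by blast
      define P where "P = L * \<Delta> / \<epsilon>"
      have P0: "P \<ge> 0" unfolding P_def using Lpos Dnn eps by simp
      have Hp: "R.H m0 > 0" by (rule R.H_pos[OF m0(1)])
      have m0p: "real m0 > 0" using m0 by simp
      have e1: "real K * ((real S - 1 + 2 * real m0) / R.H m0) = 24 * P * (real S - 1 + 2 * real m0) / R.H m0"
        unfolding K_def P_def by simp
      have e2: "h m0 = P * (real m0 + q) / R.H m0"
        unfolding h_def P_def q_def R.H_def[symmetric] using m0p Hp eps
        by (simp add: field_simps power2_eq_square)
      have "24 * P * (real S - 1 + 2 * real m0) \<le> 24 * P * (q + 2 * real m0)"
        using Sle P0 by (intro mult_left_mono) auto
      also have "\<dots> \<le> 96 * P * (real m0 + q)" using P0 q0 m0p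
        by (simp add: algebra_simps mult_left_mono)
      finally have le: "24 * P * (real S - 1 + 2 * real m0) / R.H m0 \<le> 96 * P * (real m0 + q) / R.H m0"
        using Hp by (simp add: divide_right_mono)
      have "now (rennala_run n \<tau> S \<gamma> G x0 \<omega> m) \<le> real K * ((real S - 1 + 2 * real m0) / R.H m0)"
        by (rule m(2))
      also have "\<dots> = 24 * P * (real S - 1 + 2 * real m0) / R.H m0" by (rule e1)
      also have "\<dots> \<le> 96 * P * (real m0 + q) / R.H m0" by (rule le)
      also have "\<dots> = 96 * h m0" using e2 by simp
      finally have "now (rennala_run n \<tau> S \<gamma> G x0 \<omega> m) \<le> 96 * h m0" .
      then show "\<exists>m. iter (rennala_run n \<tau> S \<gamma> G x0 \<omega> m) = K \<and>
              now (rennala_run n \<tau> S \<gamma> G x0 \<omega> m) \<le>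
                96 * Min ((\<lambda>m. inverse ((1 / real m) * (\<Sum>i=1..m. 1 / \<tau> i)) *
                         (L * \<Delta> / \<epsilon> + \<sigma>\<^sup>2 * L * \<Delta> / (real m * \<epsilon>\<^sup>2))) ` {1..n})"
        using m(1) m0(2) unfolding h_def by auto
    qed
  next
    define N where "N k = (\<integral>\<^sup>+\<omega>. ennreal ((norm (gradf (R.X k \<omega>)))\<^sup>2) \<partial>R.PP)" for k
    have lhs: "(\<Sum>k<K. \<integral>\<^sup>+ \<omega>. ennreal ((norm (gradf (rennala_iterate n \<tau> S \<gamma> G x0 \<omega> k)))\<^sup>2)
                        \<partial>(PiM UNIV (\<lambda>_::nat. D))) = (\<Sum>k<K. N k)"
      unfolding N_def R.iterate_eq ..
    define cv where "cv = L * \<gamma>\<^sup>2 * \<sigma>\<^sup>2 / (2 * real S)"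
    have cv0: "cv \<ge> 0" unfolding cv_def using Lpos Spos by simp
    have bN: "R.b k = ennreal (\<gamma> / 2) * N k" for k
    proof -
      have m: "(\<lambda>\<omega>. ennreal ((norm (gradf (R.X k \<omega>)))\<^sup>2)) \<in> borel_measurable R.PP"
      proof -
        have c: "(\<lambda>v::'a. (norm v)\<^sup>2) \<in> borel_measurable borel"
          by (rule borel_measurable_continuous_onI) (intro continuous_intros)
        have "(\<lambda>v. ennreal ((norm (gradf v))\<^sup>2)) \<in> borel_measurable borel"
          by (rule measurable_compose[OF _ measurable_ennreal], rule measurable_compose[OF R.gradf_meas c])
        from measurable_compose[OF R.X_meas this] show ?thesis by simp
      qed
      have "R.b k = (\<integral>\<^sup>+\<omega>. ennreal (\<gamma> / 2) * ennreal ((norm (gradf (R.X k \<omega>)))\<^sup>2) \<partial>R.PP)"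
        unfolding R.b_def by (rule nn_integral_cong, rule ennreal_mult) (use gpos in auto)
      also have "\<dots> = ennreal (\<gamma> / 2) * N k" unfolding N_def by (rule nn_integral_cmult[OF m])
      finally show ?thesis .
    qed
    have a0: "R.a 0 = ennreal \<Delta>"
    proof -
      have "emeasure R.PP (space R.PP) = 1"
        by (rule prob_space.emeasure_space_1, rule prob_space_PiM) (use D_prob in auto)
      then show ?thesis unfolding R.a_def using Delta by simp
    qed
    have "(\<Sum>k<K. R.b k) \<le> R.a K + (\<Sum>k<K. R.b k)" by simp
    also have "\<dots> \<le> R.a 0 + of_nat K * R.c" by (rule R.sum_bound)
    also have "\<dots> = ennreal (\<Delta> + real K * cv)"
      unfolding a0 R.c_def cv_def[symmetric] using Dnn cv0
      by (simp add: ennreal_of_nat_eq_real_of_nat ennreal_mult ennreal_plus)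
    finally have T: "ennreal (\<gamma> / 2) * (\<Sum>k<K. N k) \<le> ennreal (\<Delta> + real K * cv)"
      by (simp add: bN sum_distrib_left)
    have main: "ennreal (1 / real K) * (\<Sum>k<K. N k) \<le> ennreal \<epsilon>"
    proof (cases "K = 0")
      case True then show ?thesis by simp
    next
      case False
      have Kp: "real K > 0" using False by simp
      have "(\<Sum>k<K. N k) = ennreal (2 / \<gamma>) * (ennreal (\<gamma> / 2) * (\<Sum>k<K. N k))"
        using gpos by (simp add: mult.assoc[symmetric] ennreal_mult[symmetric])
      also have "\<dots> \<le> ennreal (2 / \<gamma>) * ennreal (\<Delta> + real K * cv)"
        by (rule mult_left_mono[OF T]) simp
      finally have "ennreal (1 / real K) * (\<Sum>k<K. N k) \<le> ennreal (1 / real K) * (ennreal (2 / \<gamma>) * ennreal (\<Delta> + real K * cv))"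
        by (rule mult_left_mono) simp
      also have "\<dots> = ennreal (1 / real K * (2 / \<gamma> * (\<Delta> + real K * cv)))"
      proof -
        have X0: "\<Delta> + real K * cv \<ge> 0" using Dnn cv0 by simp
        have "ennreal (2 / \<gamma>) * ennreal (\<Delta> + real K * cv) = ennreal (2 / \<gamma> * (\<Delta> + real K * cv))"
          by (rule ennreal_mult[symmetric]) (use gpos X0 in auto)
        moreover have "ennreal (1 / real K) * ennreal (2 / \<gamma> * (\<Delta> + real K * cv)) = ennreal (1 / real K * (2 / \<gamma> * (\<Delta> + real K * cv)))"
          by (rule ennreal_mult[symmetric]) (use gpos X0 in auto)
        ultimately show ?thesis by simp
      qed
      also have "\<dots> \<le> ennreal \<epsilon>"
      proof (rule ennreal_leI)
        have eqX: "1 / real K * (2 / \<gamma> * (\<Delta> + real K * cv)) = 2 * \<Delta> / (\<gamma> * real K) + 2 * cv / \<gamma>"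
          using Kp gpos by (simp add: field_simps)
        have A6: "2 * \<Delta> / (\<gamma> * real K) \<le> \<epsilon> / 6"
        proof -
          have "2 * \<Delta> * 6 \<le> \<epsilon> * (\<gamma> * real K)"
          proof -
            have "\<epsilon> * (\<gamma> * real K) = 24 * (\<gamma> * L) * \<Delta>" unfolding K_def using eps by (simp add: field_simps)
            also have "\<dots> \<ge> 24 * (1 / 2) * \<Delta>" using gL2 Dnn by (intro mult_right_mono mult_left_mono) auto
            finally show ?thesis by simp
          qed
          then show ?thesis using gpos Kp by (simp add: divide_simps)
        qed
        have B2: "2 * cv / \<gamma> \<le> \<epsilon> / 2"
        proof (cases "\<sigma>\<^sup>2 = 0")
          case True then show ?thesis unfolding cv_def using eps by simp
        next
          case False
          then have s2: "\<sigma>\<^sup>2 > 0" by simp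
          have "\<gamma> \<le> \<epsilon> * real S / (2 * L * \<sigma>\<^sup>2)" using gamma_def False by simp
          then have "\<gamma> * (2 * L * \<sigma>\<^sup>2) \<le> \<epsilon> * real S" using Lpos s2 by (simp add: field_simps)
          moreover have "2 * cv / \<gamma> = L * \<gamma> * \<sigma>\<^sup>2 / real S" unfolding cv_def using gpos Spos
            by (simp add: field_simps power2_eq_square)
          ultimately show ?thesis
          proof -
            assume a1: "\<gamma> * (2 * L * \<sigma>\<^sup>2) \<le> \<epsilon> * real S" and a2: "2 * cv / \<gamma> = L * \<gamma> * \<sigma>\<^sup>2 / real S"
            have Sp: "real S > 0" using Spos by simp
            have "L * \<gamma> * \<sigma>\<^sup>2 * 2 \<le> \<epsilon> * real S" using a1 by (simp add: algebra_simps)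
            then have "L * \<gamma> * \<sigma>\<^sup>2 / real S \<le> \<epsilon> / 2" using Sp by (simp add: divide_simps)
            then show ?thesis using a2 by simp
          qed
        qed
        show "1 / real K * (2 / \<gamma> * (\<Delta> + real K * cv)) \<le> \<epsilon>" using eqX A6 B2 eps by linarith
      qed
      finally show ?thesis .
    qed
    then show "ennreal (1 / real K) * (\<Sum>k<K. \<integral>\<^sup>+ \<omega>. ennreal ((norm (gradf (rennala_iterate n \<tau> S \<gamma> G x0 \<omega> k)))\<^sup>2)
                        \<partial>(PiM UNIV (\<lambda>_::nat. D))) \<le> ennreal \<epsilon>"
      unfolding lhs .
  qed
qed


end
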